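(* Let $P,Q\in\mathbb{C}[X]$ be nonlinear with $n=\deg P\ge m=\deg Q$, both satisfying Hypothesis I, and let $C\subset\mathbb{P}^2(\mathbb{C})$ be the curve $F=0$, $F(z_0,z_1,z_2)=z_2^n\big(P(z_0/z_2)-Q(z_1/z_2)\big)$. With the notation of the context, for $1\le i\le l_0$ let $\mathfrak p_i=(\alpha_i:\beta_{\tau(i)}:1)\in C$, and let orders be computed along an arbitrary nonconstant local holomorphic parameterization of $C$ at the relevant point. Then: (i) if $1\le i\ne j\le l_0$ and $L_{i,j}$ is not identically zero on any component of $C$, then $\operatorname{ord}_{\mathfrak p_i}L_{i,j}\ge\min\{\operatorname{ord}_{\mathfrak p_i}(z_0-\alpha_iz_2),\operatorname{ord}_{\mathfrak p_i}(z_1-\beta_{\tau(i)}z_2)\}$ and $\operatorname{ord}_{\mathfrak p_j}L_{i,j}\ge\min\{\operatorname{ord}_{\mathfrak p_j}(z_0-\alpha_jz_2),\operatorname{ord}_{\mathfrak p_j}(z_1-\beta_{\tau(j)}z_2)\}$; (ii) $(p_i+1)\operatorname{ord}_{\mathfrak p_i}(z_0-\alpha_iz_2)=(q_{\tau(i)}+1)\operatorname{ord}_{\mathfrak p_i}(z_1-\beta_{\tau(i)}z_2)$; (iii) $\operatorname{ord}_{\mathfrak p_i}W(z_1,z_2)\ge\operatorname{ord}_{\mathfrak p_i}(z_1-\beta_{\tau(i)}z_2)-1$.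
   Context: Write $P'(X)=na_n\prod_{i=1}^l(X-\alpha_i)^{p_i}$, $Q'(X)=mb_m\prod_{j=1}^h(X-\beta_j)^{q_j}$ with distinct $\alpha_i$, distinct $\beta_j$. Hypothesis I for $P$: $P(\alpha_i)\ne P(\alpha_j)$ for $i\ne j$; similarly for $Q$. Let $A_0=\{(i,j):P(\alpha_i)=Q(\beta_j)\}$, $l_0=\#A_0$. Under Hypothesis I each $i$ has at most one partner $j$, and the roots are labelled so that $A_0=\{(1,\tau(1)),\dots,(l_0,\tau(l_0))\}$ with $\tau$ injective. For $1\le i\ne j\le l_0$, $L_{i,j}=(z_1-\beta_{\tau(j)}z_2)-\frac{\beta_{\tau(i)}-\beta_{\tau(j)}}{\alpha_i-\alpha_j}(z_0-\alpha_jz_2)$ is the linear form of the line through $(\alpha_i:\beta_{\tau(i)}:1)$ and $(\alpha_j:\beta_{\tau(j)}:1)$. $W(z_1,z_2)=z_1dz_2-z_2dz_1$. For a point $\mathfrak p=(a:b:1)\in C$ and a nonconstant local holomorphic parameterization $\varphi(t)=(x(t):y(t):1)$ of $C$ with $\varphi(0)=\mathfrak p$, $\operatorname{ord}_{\mathfrak p}G$ of a homogeneous polynomial $G$ means $\operatorname{ord}_{t=0}G(x(t),y(t),1)$, and the order of a $1$-form $g(t)\,dt$ is $\operatorname{ord}_{t=0}g$ (so $W(z_1,z_2)$ pulls back to $-y'(t)\,dt$). *)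

theory Defs
  imports "HOL-Complex_Analysis.Complex_Analysis" "HOL-Computational_Algebra.Polynomial"
    "HOL-Library.Extended_Nat"
begin

definition hypI :: "complex poly \<Rightarrow> bool" where
  "hypI P \<longleftrightarrow> (\<forall>a b. poly (pderiv P) a = 0 \<and> poly (pderiv P) b = 0 \<and> a \<noteq> b
                    \<longrightarrow> poly P a \<noteq> poly P b)"

definition ord0 :: "(complex \<Rightarrow> complex) \<Rightarrow> enat" where
  "ord0 g = (if (\<forall>\<^sub>F t in nhds 0. g t = 0) then \<infinity> else enat (nat (zorder g 0)))"

text \<open>phi(t) = (x t : y t : 1) is a nonconstant local holomorphic parameterization of the
  curve P(z0/z2) = Q(z1/z2) (affine part z2 = 1) with phi(0) = (a : b : 1).\<close>
definition local_param ::
  "complex poly \<Rightarrow> complex poly \<Rightarrow> (complex \<Rightarrow> complex) \<Rightarrow> (complex \<Rightarrow> complex) \<Rightarrow> complex \<Rightarrow> complex \<Rightarrow> bool" where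
  "local_param P Q x y a b \<longleftrightarrow>
     (\<exists>r>0. x holomorphic_on ball 0 r \<and> y holomorphic_on ball 0 r \<and>
            (\<forall>t\<in>ball 0 r. poly P (x t) = poly Q (y t))) \<and>
     x 0 = a \<and> y 0 = b \<and> \<not> (\<forall>\<^sub>F t in nhds 0. x t = a \<and> y t = b)"

text \<open>The linear form L_{i,j} (dehomogenized at z2 = 1), for p_i = (a:b:1), p_j = (a':b':1).\<close>
definition Lline :: "complex \<Rightarrow> complex \<Rightarrow> complex \<Rightarrow> complex \<Rightarrow> complex \<Rightarrow> complex \<Rightarrow> complex" where
  "Lline a b a' b' u v = (v - b') - (b - b') / (a - a') * (u - a')"

end

theory Submission
  imports Defs
begin


lemma ord0_fps:
  assumes "f has_fps_expansion F"
  shows "ord0 f = (if F = 0 then \<infinity> else enat (subdegree F))"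
proof -
  have iff: "(\<forall>\<^sub>F t in nhds 0. f t = 0) \<longleftrightarrow> F = 0"
  proof
    assume "\<forall>\<^sub>F t in nhds 0. f t = 0"
    hence "f has_fps_expansion 0" by (simp add: has_fps_expansion_0_iff)
    thus "F = 0" using assms fps_expansion_unique_complex by blast
  next
    assume "F = 0" thus "\<forall>\<^sub>F t in nhds 0. f t = 0"
      using assms by (simp add: has_fps_expansion_0_iff)
  qed
  show ?thesis
  proof (cases "F = 0")
    case True thus ?thesis using iff by (simp add: ord0_def)
  next
    case False
    hence "zorder f 0 = int (subdegree F)" using has_fps_expansion_zorder_0[OF assms] by simp
    thus ?thesis using iff False by (simp add: ord0_def)
  qed
qed

lemma ord0_cong:
  assumes "\<forall>\<^sub>F t in nhds 0. f t = g t"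
  shows "ord0 f = ord0 g"
proof -
  have e: "(\<forall>\<^sub>F t in nhds 0. f t = 0) \<longleftrightarrow> (\<forall>\<^sub>F t in nhds 0. g t = 0)"
    using assms by (auto elim: eventually_elim2)
  have "\<forall>\<^sub>F t in at 0. f t = g t" using assms eventually_nhds_conv_at by blast
  hence "zorder f 0 = zorder g 0" by (intro zorder_cong) auto
  thus ?thesis using e by (simp add: ord0_def)
qed

lemma hol_fps:
  assumes "r > 0" "g holomorphic_on ball 0 r"
  shows "g has_fps_expansion fps_expansion g 0"
  using assms analytic_at_ball analytic_at_imp_has_fps_expansion_0 by blast

lemma ord_lin:
  assumes "f has_fps_expansion F" "g has_fps_expansion G"
  shows "ord0 (\<lambda>t. f t - c * g t) \<ge> min (ord0 f) (ord0 g)"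
proof -
  define H where "H = F - fps_const c * G"
  have hH: "(\<lambda>t. f t - c * g t) has_fps_expansion H"
    unfolding H_def by (intro fps_expansion_intros assms)
  show ?thesis
  proof (cases "H = 0")
    case True thus ?thesis using ord0_fps[OF hH] by simp
  next
    case False
    define k where "k = subdegree H"
    have nz: "H $ k \<noteq> 0" using False k_def by simp
    show ?thesis
    proof (rule ccontr)
      assume "\<not> ?thesis"
      hence "enat k < min (ord0 f) (ord0 g)"
        using ord0_fps[OF hH] False k_def by (simp add: not_le)
      hence lt: "enat k < ord0 f" "enat k < ord0 g" by simp_all
      have "F $ k = 0"
        using lt(1) ord0_fps[OF assms(1)] by (cases "F = 0") auto
      moreover have "G $ k = 0"
        using lt(2) ord0_fps[OF assms(2)] by (cases "G = 0") auto
      ultimately have "H $ k = 0" by (simp add: H_def)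
      thus False using nz by simp
    qed
  qed
qed

lemma ord_poly:
  fixes R :: "complex poly"
  assumes "r > 0" "g holomorphic_on ball 0 r" "degree R \<ge> 1" "g 0 = c"
  shows "ord0 (\<lambda>t. poly R (g t) - poly R c) = of_nat (order c (pderiv R) + 1) * ord0 (\<lambda>t. g t - c)"
proof -
  define R' where "R' = R - [:poly R c:]"
  have R'nz: "R' \<noteq> 0"
  proof
    assume "R' = 0" hence "R = [:poly R c:]" by (simp add: R'_def)
    hence "degree R = 0" by (metis degree_pCons_0)
    thus False using assms(3) by simp
  qed
  have rt: "poly R' c = 0" by (simp add: R'_def)
  have pd: "pderiv R' = pderiv R" by (simp add: R'_def pderiv_diff pderiv_pCons)
  define k where "k = order c (pderiv R) + 1"
  have ok: "order c R' = k" using order_pderiv[OF R'nz rt] pd k_def by simp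
  obtain H where H: "R' = [:- c, 1:] ^ k * H" "\<not> [:- c, 1:] dvd H"
    using order_decomp[OF R'nz] ok by metis
  have Hc: "poly H c \<noteq> 0" using H(2) poly_eq_0_iff_dvd by blast
  have feq: "(\<lambda>t. poly R (g t) - poly R c) = (\<lambda>t. (g t - c) ^ k * poly H (g t))"
  proof
    fix t
    have "poly R' (g t) = poly ([:- c, 1:] ^ k * H) (g t)" using H(1) by simp
    thus "poly R (g t) - poly R c = (g t - c) ^ k * poly H (g t)"
      by (simp add: R'_def poly_power)
  qed
  define G where "G = fps_expansion g 0"
  have hG: "g has_fps_expansion G" unfolding G_def using hol_fps assms by blast
  have holH: "(\<lambda>t. poly H (g t)) holomorphic_on ball 0 r"
    using assms(2) by (intro holomorphic_intros)
  define K where "K = fps_expansion (\<lambda>t. poly H (g t)) 0"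
  have hK: "(\<lambda>t. poly H (g t)) has_fps_expansion K" unfolding K_def using hol_fps[OF assms(1) holH] .
  have K0: "K $ 0 \<noteq> 0"
  proof -
    have "K $ 0 = poly H (g 0)" using fps_nth_fps_expansion[OF hK, of 0] by simp
    thus ?thesis using Hc assms(4) by simp
  qed
  define D where "D = G - fps_const c"
  have hD: "(\<lambda>t. g t - c) has_fps_expansion D" unfolding D_def by (intro fps_expansion_intros hG)
  have hP: "(\<lambda>t. poly R (g t) - poly R c) has_fps_expansion D ^ k * K"
    unfolding feq by (intro fps_expansion_intros hD hK)
  have Knz: "K \<noteq> 0" using K0 by auto
  have k1: "k \<ge> 1" by (simp add: k_def)
  show ?thesis
  proof (cases "D = 0")
    case True
    have inf: "(of_nat (order c (pderiv R) + 1) :: enat) * \<infinity> = \<infinity>"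
      by (simp only: of_nat_eq_enat times_enat_simps) simp
    show ?thesis using True ord0_fps[OF hP] ord0_fps[OF hD] k1 k_def inf
      by (simp add: zero_power)
  next
    case False
    have "subdegree (D ^ k * K) = k * subdegree D"
      using False Knz K0 by simp
    moreover have e: "(of_nat (order c (pderiv R) + 1) :: enat) * enat (subdegree D)
        = enat ((order c (pderiv R) + 1) * subdegree D)"
      by (simp only: of_nat_eq_enat times_enat_simps)
    ultimately show ?thesis using ord0_fps[OF hP] ord0_fps[OF hD] False Knz k_def
      by simp
  qed
qed

lemma ord_deriv:
  assumes "r > 0" "y holomorphic_on ball 0 r"
  shows "ord0 (\<lambda>t. - deriv y t) \<ge> ord0 (\<lambda>t. y t - b) - 1"
proof -
  define Y where "Y = fps_expansion y 0"
  have hY: "y has_fps_expansion Y" unfolding Y_def using hol_fps assms by blast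
  define D where "D = Y - fps_const b"
  have hD: "(\<lambda>t. y t - b) has_fps_expansion D" unfolding D_def by (intro fps_expansion_intros hY)
  have hd: "(\<lambda>t. - deriv y t) has_fps_expansion - fps_deriv Y"
    by (intro fps_expansion_intros hY)
  have dd: "fps_deriv Y = fps_deriv D" by (simp add: D_def)
  show ?thesis
  proof (cases "- fps_deriv Y = 0")
    case True thus ?thesis using ord0_fps[OF hd] by simp
  next
    case False
    hence Dnz: "D \<noteq> 0" using dd by auto
    have "subdegree (- fps_deriv Y) \<ge> subdegree D - 1"
    proof (rule subdegree_geI[OF False])
      fix i assume "i < subdegree D - 1"
      hence "i + 1 < subdegree D" by simp
      hence "D $ (i+1) = 0" by blast
      thus "(- fps_deriv Y) $ i = 0" using dd by simp
    qed
    thus ?thesis using ord0_fps[OF hd] ord0_fps[OF hD] False Dnz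
      by (simp add: one_enat_def)
  qed
qed

theorem lemma3p3:
  fixes P Q :: "complex poly"
  assumes "degree P \<ge> 2" and "degree Q \<ge> 2" and "degree Q \<le> degree P"
    and "hypI P" and "hypI Q"
  shows
   "(\<forall>a b a' b' x y.
       poly (pderiv P) a = 0 \<and> poly (pderiv Q) b = 0 \<and> poly P a = poly Q b \<and>
       poly (pderiv P) a' = 0 \<and> poly (pderiv Q) b' = 0 \<and> poly P a' = poly Q b' \<and> a \<noteq> a' \<and>
       local_param P Q x y a b \<and> \<not> (\<forall>\<^sub>F t in nhds 0. Lline a b a' b' (x t) (y t) = 0)
       \<longrightarrow> ord0 (\<lambda>t. Lline a b a' b' (x t) (y t)) \<ge> min (ord0 (\<lambda>t. x t - a)) (ord0 (\<lambda>t. y t - b)))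
  \<and> (\<forall>a b a' b' x y.
       poly (pderiv P) a = 0 \<and> poly (pderiv Q) b = 0 \<and> poly P a = poly Q b \<and>
       poly (pderiv P) a' = 0 \<and> poly (pderiv Q) b' = 0 \<and> poly P a' = poly Q b' \<and> a \<noteq> a' \<and>
       local_param P Q x y a' b' \<and> \<not> (\<forall>\<^sub>F t in nhds 0. Lline a b a' b' (x t) (y t) = 0)
       \<longrightarrow> ord0 (\<lambda>t. Lline a b a' b' (x t) (y t)) \<ge> min (ord0 (\<lambda>t. x t - a')) (ord0 (\<lambda>t. y t - b')))
  \<and> (\<forall>a b x y.
       poly (pderiv P) a = 0 \<and> poly (pderiv Q) b = 0 \<and> poly P a = poly Q b \<and> local_param P Q x y a b
       \<longrightarrow> of_nat (order a (pderiv P) + 1) * ord0 (\<lambda>t. x t - a)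
           = of_nat (order b (pderiv Q) + 1) * ord0 (\<lambda>t. y t - b))
  \<and> (\<forall>a b x y.
       poly (pderiv P) a = 0 \<and> poly (pderiv Q) b = 0 \<and> poly P a = poly Q b \<and> local_param P Q x y a b
       \<longrightarrow> ord0 (\<lambda>t. - deriv y t) \<ge> ord0 (\<lambda>t. y t - b) - 1)"
proof -
  have degP: "degree P \<ge> 1" and degQ: "degree Q \<ge> 1" using assms by auto
  have LP: "local_param P Q x y c d \<Longrightarrow> (\<exists>r>0. x holomorphic_on ball 0 r \<and> y holomorphic_on ball 0 r \<and>
            (\<forall>t\<in>ball 0 r. poly P (x t) = poly Q (y t))) \<and> x 0 = c \<and> y 0 = d" for x y c d
    by (simp add: local_param_def)
  have fx: "(\<lambda>t. f t - c) has_fps_expansion fps_expansion f 0 - fps_const c"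
    if "r > 0" "f holomorphic_on ball 0 r" for f :: "complex \<Rightarrow> complex" and r c
    by (intro fps_expansion_intros hol_fps[OF that])
  have part1: "ord0 (\<lambda>t. Lline a b a' b' (x t) (y t)) \<ge> min (ord0 (\<lambda>t. x t - a)) (ord0 (\<lambda>t. y t - b))"
    if h: "a \<noteq> a'" "local_param P Q x y a b" for a b a' b' x y
  proof -
    obtain r where r: "r > 0" "x holomorphic_on ball 0 r" "y holomorphic_on ball 0 r"
      using LP[OF h(2)] by blast
    define s where "s = (b - b') / (a - a')"
    have eq: "(\<lambda>t. Lline a b a' b' (x t) (y t)) = (\<lambda>t. (y t - b) - s * (x t - a))"
      using h(1) by (auto simp: Lline_def s_def field_simps)
    show ?thesis unfolding eq using ord_lin[OF fx[OF r(1,3), where c=b] fx[OF r(1,2), where c=a], where c=s]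
      by (simp add: min.commute)
  qed
  have part2: "ord0 (\<lambda>t. Lline a b a' b' (x t) (y t)) \<ge> min (ord0 (\<lambda>t. x t - a')) (ord0 (\<lambda>t. y t - b'))"
    if h: "local_param P Q x y a' b'" for a b a' b' x y
  proof -
    obtain r where r: "r > 0" "x holomorphic_on ball 0 r" "y holomorphic_on ball 0 r"
      using LP[OF h(1)] by blast
    define s where "s = (b - b') / (a - a')"
    have eq: "(\<lambda>t. Lline a b a' b' (x t) (y t)) = (\<lambda>t. (y t - b') - s * (x t - a'))"
      by (auto simp: Lline_def s_def)
    show ?thesis unfolding eq using ord_lin[OF fx[OF r(1,3), where c=b'] fx[OF r(1,2), where c=a'], where c=s]
      by (simp add: min.commute)
  qed
  have part3: "of_nat (order a (pderiv P) + 1) * ord0 (\<lambda>t. x t - a)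
           = of_nat (order b (pderiv Q) + 1) * ord0 (\<lambda>t. y t - b)"
    if h: "poly P a = poly Q b" "local_param P Q x y a b" for a b x y
  proof -
    obtain r where r: "r > 0" "x holomorphic_on ball 0 r" "y holomorphic_on ball 0 r"
      "\<forall>t\<in>ball 0 r. poly P (x t) = poly Q (y t)" "x 0 = a" "y 0 = b"
      using LP[OF h(2)] by blast
    have ev: "\<forall>\<^sub>F t in nhds 0. t \<in> ball 0 r"
      using r(1) by (intro eventually_nhds_in_open) auto
    have "\<forall>\<^sub>F t in nhds 0. poly P (x t) - poly P a = poly Q (y t) - poly Q b"
      using ev by eventually_elim (use r(4) h(1) in auto)
    hence "ord0 (\<lambda>t. poly P (x t) - poly P a) = ord0 (\<lambda>t. poly Q (y t) - poly Q b)"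
      by (rule ord0_cong)
    thus ?thesis using ord_poly[OF r(1,2) degP r(5)] ord_poly[OF r(1,3) degQ r(6)] by simp
  qed
  have part4: "ord0 (\<lambda>t. - deriv y t) \<ge> ord0 (\<lambda>t. y t - b) - 1"
    if h: "local_param P Q x y a b" for a b x y
  proof -
    obtain r where r: "r > 0" "y holomorphic_on ball 0 r"
      using LP[OF h(1)] by blast
    show ?thesis by (rule ord_deriv[OF r])
  qed
  show ?thesis using part1 part2 part3 part4 by blast
qed

end
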